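(* Let $(\Omega,\Sigma,\mathbb P)$ be any probability space. The Banach couple $(\ell_1,\ell_2)$ is not $\mathcal K$-closed representable in the Banach couple $(L_\infty(\Omega),L_2(\Omega))$.
   Context: For a Banach couple $(X_0,X_1)$, $x\in X_0+X_1$ and $t>0$, $\mathcal K(t,x;X_0,X_1)=\inf\{\|x_0\|_{X_0}+t\|x_1\|_{X_1}: x=x_0+x_1,\ x_0\in X_0,\ x_1\in X_1\}$. A Banach couple $(X_0,X_1)$ is $\mathcal K$-closed representable in a Banach couple $(Y_0,Y_1)$ if there is a linear operator $T:X_0+X_1\to Y_0+Y_1$ which is injective and bounded from $X_0$ into $Y_0$ and from $X_1$ into $Y_1$, and a constant $C>0$ such that $C^{-1}\mathcal K(t,x;X_0,X_1)\le\mathcal K(t,Tx;Y_0,Y_1)\le C\,\mathcal K(t,x;X_0,X_1)$ for all $x\in X_0+X_1$ and $t>0$. *)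

theory Defs
  imports "HOL-Probability.Probability"
begin

definition l1 :: "(nat \<Rightarrow> real) set" where
  "l1 = {x. summable (\<lambda>n. \<bar>x n\<bar>)}"

definition l1_norm :: "(nat \<Rightarrow> real) \<Rightarrow> real" where
  "l1_norm x = (\<Sum>n. \<bar>x n\<bar>)"

definition l2 :: "(nat \<Rightarrow> real) set" where
  "l2 = {x. summable (\<lambda>n. (x n)^2)}"

definition l2_norm :: "(nat \<Rightarrow> real) \<Rightarrow> real" where
  "l2_norm x = sqrt (\<Sum>n. (x n)^2)"

definition l12_sum :: "(nat \<Rightarrow> real) set" where
  "l12_sum = {x. \<exists>x0\<in>l1. \<exists>x1\<in>l2. \<forall>i. x i = x0 i + x1 i}"

definition K_l12 :: "real \<Rightarrow> (nat \<Rightarrow> real) \<Rightarrow> real" where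
  "K_l12 t x = Inf {l1_norm x0 + t * l2_norm x1 | x0 x1.
      x0 \<in> l1 \<and> x1 \<in> l2 \<and> (\<forall>i. x i = x0 i + x1 i)}"

section \<open>The function couple (L_infty(M), L_2(M)); elements are represented by
  functions, equality of elements is almost-everywhere equality\<close>

definition Linf :: "'a measure \<Rightarrow> ('a \<Rightarrow> real) set" where
  "Linf M = {f \<in> borel_measurable M. \<exists>C. AE \<omega> in M. \<bar>f \<omega>\<bar> \<le> C}"

definition Linf_norm :: "'a measure \<Rightarrow> ('a \<Rightarrow> real) \<Rightarrow> real" where
  "Linf_norm M f = Inf {C. 0 \<le> C \<and> (AE \<omega> in M. \<bar>f \<omega>\<bar> \<le> C)}"

definition L2 :: "'a measure \<Rightarrow> ('a \<Rightarrow> real) set" where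
  "L2 M = {f \<in> borel_measurable M. integrable M (\<lambda>\<omega>. (f \<omega>)^2)}"

definition L2_norm :: "'a measure \<Rightarrow> ('a \<Rightarrow> real) \<Rightarrow> real" where
  "L2_norm M f = sqrt (\<integral>\<omega>. (f \<omega>)^2 \<partial>M)"

definition LinfL2_sum :: "'a measure \<Rightarrow> ('a \<Rightarrow> real) set" where
  "LinfL2_sum M = {f. \<exists>f0\<in>Linf M. \<exists>f1\<in>L2 M. AE \<omega> in M. f \<omega> = f0 \<omega> + f1 \<omega>}"

definition K_LinfL2 :: "'a measure \<Rightarrow> real \<Rightarrow> ('a \<Rightarrow> real) \<Rightarrow> real" where
  "K_LinfL2 M t f = Inf {Linf_norm M f0 + t * L2_norm M f1 | f0 f1.
      f0 \<in> Linf M \<and> f1 \<in> L2 M \<and> (AE \<omega> in M. f \<omega> = f0 \<omega> + f1 \<omega>)}"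

definition l12_K_closed_representable_in_LinfL2 :: "'a measure \<Rightarrow> bool" where
  "l12_K_closed_representable_in_LinfL2 M \<longleftrightarrow>
    (\<exists>T :: (nat \<Rightarrow> real) \<Rightarrow> ('a \<Rightarrow> real). \<exists>C > 0.
       \<comment> \<open>T maps X0 + X1 into Y0 + Y1\<close>
       (\<forall>x\<in>l12_sum. T x \<in> LinfL2_sum M) \<and>
       \<comment> \<open>T is linear (as a map into a.e.-classes)\<close>
       (\<forall>x\<in>l12_sum. \<forall>y\<in>l12_sum. \<forall>a b :: real.
          AE \<omega> in M. T (\<lambda>i. a * x i + b * y i) \<omega> = a * T x \<omega> + b * T y \<omega>) \<and>
       \<comment> \<open>T is injective (as a map into a.e.-classes)\<close>
       (\<forall>x\<in>l12_sum. \<forall>y\<in>l12_sum. (AE \<omega> in M. T x \<omega> = T y \<omega>) \<longrightarrow> x = y) \<and>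
       \<comment> \<open>T is bounded from l1 into L_infty\<close>
       (\<exists>B. \<forall>x\<in>l1. T x \<in> Linf M \<and> Linf_norm M (T x) \<le> B * l1_norm x) \<and>
       \<comment> \<open>T is bounded from l2 into L_2\<close>
       (\<exists>B. \<forall>x\<in>l2. T x \<in> L2 M \<and> L2_norm M (T x) \<le> B * l2_norm x) \<and>
       \<comment> \<open>two-sided K-functional estimate\<close>
       (\<forall>x\<in>l12_sum. \<forall>t>0.
          K_l12 t x / C \<le> K_LinfL2 M t (T x) \<and> K_LinfL2 M t (T x) \<le> C * K_l12 t x))"

end

theory Submission
  imports Defs
begin


definition sgnb :: "bool \<Rightarrow> real" where "sgnb b = (if b then 1 else -1)"
definition EE :: "nat \<Rightarrow> (nat \<Rightarrow> bool) set" where "EE N = {e. \<forall>n\<ge>N. \<not> e n}"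
definition SS :: "(nat \<Rightarrow> real) \<Rightarrow> nat \<Rightarrow> (nat \<Rightarrow> bool) \<Rightarrow> real" where
  "SS a N e = (\<Sum>n<N. sgnb (e n) * a n)"

lemma sgnb_sq[simp]: "(sgnb b)^2 = 1" "\<bar>sgnb b\<bar> = 1"
  by (auto simp: sgnb_def)

lemma EE_Suc: "EE (Suc N) = EE N \<union> (\<lambda>e. e(N:=True)) ` EE N"
proof
  show "EE (Suc N) \<subseteq> EE N \<union> (\<lambda>e. e(N:=True)) ` EE N"
  proof
    fix e assume e: "e \<in> EE (Suc N)"
    show "e \<in> EE N \<union> (\<lambda>e. e(N:=True)) ` EE N"
    proof (cases "e N")
      case True
      have "e(N:=False) \<in> EE N" using e by (auto simp: EE_def le_Suc_eq)
      moreover have "e = (e(N:=False))(N:=True)" using True by (auto simp: fun_eq_iff)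
      ultimately show ?thesis by blast
    next
      case False
      have "\<not> e n" if "N \<le> n" for n
      proof -
        have "n = N \<or> Suc N \<le> n" using that by arith
        then show ?thesis using e False by (auto simp: EE_def)
      qed
      then have "e \<in> EE N" by (auto simp: EE_def)
      then show ?thesis by blast
    qed
  qed
  show "EE N \<union> (\<lambda>e. e(N:=True)) ` EE N \<subseteq> EE (Suc N)"
    by (auto simp: EE_def)
qed

lemma EE_0: "EE 0 = {\<lambda>_. False}" by (auto simp: EE_def)

lemma finite_EE: "finite (EE N)"
  by (induction N) (simp_all only: EE_Suc EE_0 finite_Un finite_imageI, simp)

lemma sum_EE_Suc: "sum g (EE (Suc N)) = (\<Sum>e\<in>EE N. g e + g (e(N:=True)))"
proof -
  have disj: "EE N \<inter> (\<lambda>e. e(N:=True)) ` EE N = {}" by (auto simp: EE_def)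
  have inj: "inj_on (\<lambda>e. e(N:=True)) (EE N)"
  proof (rule inj_onI)
    fix x y assume "x \<in> EE N" "y \<in> EE N" "x(N := True) = y(N := True)"
    note eq = \<open>x(N := True) = y(N := True)\<close>
    have xy1: "x N = y N" using \<open>x \<in> EE N\<close> \<open>y \<in> EE N\<close> by (auto simp: EE_def)
    have xy2: "x n = y n" if "n \<noteq> N" for n using fun_cong[OF eq, of n] that by simp
    note xy = xy1 xy2
    show "x = y"
    proof
      fix n show "x n = y n" using xy by (cases "n = N") auto
    qed
  qed
  have "sum g (EE (Suc N)) = sum g (EE N) + sum g ((\<lambda>e. e(N:=True)) ` EE N)"
    unfolding EE_Suc by (rule sum.union_disjoint) (use finite_EE disj in auto)
  also have "sum g ((\<lambda>e. e(N:=True)) ` EE N) = (\<Sum>e\<in>EE N. g (e(N:=True)))"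
    by (rule sum.reindex[OF inj, unfolded comp_def])
  finally show ?thesis by (simp add: sum.distrib)
qed

lemma card_EE: "(\<Sum>e\<in>EE N. (1::real)) = 2^N"
proof (induction N)
  case 0 show ?case by (simp add: EE_0)
next
  case (Suc N) show ?case by (simp only: sum_EE_Suc sum.distrib Suc) simp
qed

lemma card_EE': "real (card (EE N)) = 2^N" using card_EE[of N] by simp

lemma quart: "((s::real) - a)^4 + (s + a)^4 = 2 * s^4 + 12 * a^2 * s^2 + 2 * a^4" by (simp add: power_def algebra_simps eval_nat_numeral)
lemma quad: "((s::real) - a)^2 + (s + a)^2 = 2 * s^2 + 2 * a^2" by (simp add: power_def algebra_simps eval_nat_numeral)

lemma SS_Suc:
  assumes "e \<in> EE N"
  shows "SS a (Suc N) e = SS a N e - a N" "SS a (Suc N) (e(N:=True)) = SS a N e + a N"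
proof -
  have "\<not> e N" using assms by (auto simp: EE_def)
  then show "SS a (Suc N) e = SS a N e - a N" by (simp add: SS_def sgnb_def)
  have "SS a N (e(N:=True)) = SS a N e" unfolding SS_def by (rule sum.cong) auto
  then show "SS a (Suc N) (e(N:=True)) = SS a N e + a N" by (simp add: SS_def sgnb_def)
qed

lemma M2: "(\<Sum>e\<in>EE N. (SS a N e)^2) = 2^N * (\<Sum>n<N. (a n)^2)"
proof (induction N)
  case 0
  then show ?case by (simp add: SS_def EE_0)
next
  case (Suc N)
  have "(\<Sum>e\<in>EE (Suc N). (SS a (Suc N) e)^2) = (\<Sum>e\<in>EE N. 2 * (SS a N e)^2 + 2 * (a N)^2)"
    unfolding sum_EE_Suc by (rule sum.cong) (simp_all add: SS_Suc quad)
  also have "\<dots> = 2 * (\<Sum>e\<in>EE N. (SS a N e)^2) + 2 * (a N)^2 * 2^N"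
    by (simp add: sum.distrib sum_distrib_left[symmetric] card_EE' )
  also have "\<dots> = 2 ^ Suc N * (\<Sum>n<Suc N. (a n)\<^sup>2)"
    unfolding Suc.IH by (simp add: distrib_left)
  finally show ?case .
qed

lemma M4:
  assumes "\<And>n. n < N \<Longrightarrow> \<bar>a n\<bar> \<le> B"
  shows "(\<Sum>e\<in>EE N. (SS a N e)^4) \<le> 2^N * (3 * real N^2 * B^4)"
  using assms
proof (induction N)
  case 0
  then show ?case by (simp add: SS_def EE_0)
next
  case (Suc N)
  have B0: "0 \<le> B" using Suc.prems[of 0] by auto
  have aB: "\<bar>a N\<bar> \<le> B" using Suc.prems[of N] by simp
  have aN2: "(a N)^2 \<le> B^2" using power_mono[OF aB abs_ge_zero, of 2] by simp
  have aN4: "(a N)^4 \<le> B^4" using power_mono[OF aB abs_ge_zero, of 4] by (simp add: power_abs)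
  have s2: "(\<Sum>n<N. (a n)^2) \<le> real N * B^2"
  proof -
    have "(\<Sum>n<N. (a n)^2) \<le> (\<Sum>n<N. B^2)"
    proof (rule sum_mono)
      fix n assume "n \<in> {..<N}"
      then have "\<bar>a n\<bar> \<le> B" using Suc.prems[of n] by simp
      from power_mono[OF this abs_ge_zero, of 2] show "(a n)^2 \<le> B^2" by simp
    qed
    then show ?thesis by simp
  qed
  have IH: "(\<Sum>e\<in>EE N. (SS a N e)^4) \<le> 2^N * (3 * real N^2 * B^4)"
    using Suc by auto
  have "(\<Sum>e\<in>EE (Suc N). (SS a (Suc N) e)^4) =
      (\<Sum>e\<in>EE N. 2 * (SS a N e)^4 + 12 * (a N)^2 * (SS a N e)^2 + 2 * (a N)^4)"
    unfolding sum_EE_Suc by (rule sum.cong) (simp_all add: SS_Suc quart)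
  also have "\<dots> = 2 * (\<Sum>e\<in>EE N. (SS a N e)^4) + 12 * (a N)^2 * (\<Sum>e\<in>EE N. (SS a N e)^2)
       + 2 * (a N)^4 * 2^N"
    by (simp add: sum.distrib sum_distrib_left[symmetric] card_EE' )
  also have "\<dots> = 2 * (\<Sum>e\<in>EE N. (SS a N e)^4) + 12 * (a N)^2 * (2^N * (\<Sum>n<N. (a n)^2))
       + 2 * (a N)^4 * 2^N" by (simp add: M2)
  also have "\<dots> \<le> 2^(Suc N) * (3 * real (Suc N)^2 * B^4)"
  proof -
    have Y0: "0 \<le> (\<Sum>n<N. (a n)^2)" by (simp add: sum_nonneg)
    have h2: "(a N)^2 * (\<Sum>n<N. (a n)^2) \<le> B^2 * (real N * B^2)"
      by (rule mult_mono[OF aN2 s2]) (auto simp: Y0)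
    have p: "(0::real) \<le> 2^N" by simp
    have h2': "2^N * ((a N)^2 * (\<Sum>n<N. (a n)^2)) \<le> 2^N * (B^2 * (real N * B^2))"
      by (rule mult_left_mono[OF h2 p])
    have h3: "2^N * (a N)^4 \<le> 2^N * B^4" by (rule mult_left_mono[OF aN4 p])
    have e1: "12 * (a N)^2 * (2^N * (\<Sum>n<N. (a n)^2)) = 12 * (2^N * ((a N)^2 * (\<Sum>n<N. (a n)^2)))"
      by (simp add: algebra_simps)
    have e2: "2^N * (B^2 * (real N * B^2)) = 2^N * (B^4 * real N)"
      by (simp add: algebra_simps power4_eq_xxxx power2_eq_square)
    have e3: "2^(Suc N) * (3 * real (Suc N)^2 * B^4) =
       2 * (2^N * (3 * real N^2 * B^4)) + 12 * (2^N * (B^4 * real N)) + 2 * (2^N * B^4) + 2^N * B^4 * 4"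
      by (simp add: algebra_simps power2_eq_square)
    have e4: "0 \<le> 2^N * B^4 * 4" using B0 by simp
    have e5: "2 * (a N)^4 * 2^N = 2 * (2^N * (a N)^4)" by simp
    show ?thesis using IH h2' h3 e1 e2 e3 e4 e5 by linarith
  qed
  finally show ?case .
qed



lemma fin_supp:
  assumes "finite {i. x i \<noteq> 0}"
  shows "x \<in> l1" "x \<in> l2" "x \<in> l12_sum"
proof -
  show "x \<in> l1" unfolding l1_def by (auto intro!: summable_finite[OF assms])
  show x2: "x \<in> l2" unfolding l2_def by (auto intro!: summable_finite[OF assms])
  have "(\<lambda>i. 0::real) \<in> l1" unfolding l1_def by simp
  then show "x \<in> l12_sum" unfolding l12_sum_def using x2 by force
qed

lemma K_l12_lower:
  "real N \<le> K_l12 (sqrt (real N)) (\<lambda>i. if i < N then sgnb (e i) else 0)"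
proof -
  define x where "x = (\<lambda>i. if i < N then sgnb (e i) else 0)"
  have fx: "finite {i. x i \<noteq> 0}" by (rule finite_subset[of _ "{..<N}"]) (auto simp: x_def)
  let ?S = "{l1_norm x0 + sqrt (real N) * l2_norm x1 | x0 x1.
      x0 \<in> l1 \<and> x1 \<in> l2 \<and> (\<forall>i. x i = x0 i + x1 i)}"
  have ne: "?S \<noteq> {}"
  proof -
    have "(\<lambda>i. 0::real) \<in> l1" unfolding l1_def by simp
    then show ?thesis using fin_supp(2)[OF fx] by force
  qed
  have "real N \<le> s" if "s \<in> ?S" for s
  proof -
    obtain x0 x1 where s: "s = l1_norm x0 + sqrt (real N) * l2_norm x1"
      and x0: "x0 \<in> l1" and x1: "x1 \<in> l2" and xx: "\<forall>i. x i = x0 i + x1 i"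
      using \<open>s \<in> ?S\<close> by blast
    have a: "(\<Sum>i<N. \<bar>x0 i\<bar>) \<le> l1_norm x0"
      unfolding l1_norm_def using x0 by (intro sum_le_suminf) (auto simp: l1_def)
    have b0: "(\<Sum>i<N. (x1 i)^2) \<le> (\<Sum>i. (x1 i)^2)"
      using x1 by (intro sum_le_suminf) (auto simp: l2_def)
    have b: "sqrt (\<Sum>i<N. (x1 i)^2) \<le> l2_norm x1"
      unfolding l2_norm_def using b0 by simp
    have cs: "(\<Sum>i<N. 1 * \<bar>x1 i\<bar>)^2 \<le> (\<Sum>i<N. 1^2) * (\<Sum>i<N. \<bar>x1 i\<bar>^2)"
      by (rule Cauchy_Schwarz_ineq_sum)
    then have cs': "(\<Sum>i<N. \<bar>x1 i\<bar>)^2 \<le> real N * (\<Sum>i<N. (x1 i)^2)" by simp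
    have c: "(\<Sum>i<N. \<bar>x1 i\<bar>) \<le> sqrt (real N) * sqrt (\<Sum>i<N. (x1 i)^2)"
    proof -
      have "(\<Sum>i<N. \<bar>x1 i\<bar>) = sqrt ((\<Sum>i<N. \<bar>x1 i\<bar>)^2)" by (simp add: sum_nonneg)
      also have "\<dots> \<le> sqrt (real N * (\<Sum>i<N. (x1 i)^2))" using cs' by (rule real_sqrt_le_mono)
      also have "\<dots> = sqrt (real N) * sqrt (\<Sum>i<N. (x1 i)^2)" by (rule real_sqrt_mult)
      finally show ?thesis .
    qed
    have "(\<Sum>i<N. \<bar>x i\<bar>) = (\<Sum>i<N. 1)" by (rule sum.cong) (auto simp: x_def)
    then have d: "real N = (\<Sum>i<N. \<bar>x i\<bar>)" by simp
    also have "\<dots> \<le> (\<Sum>i<N. \<bar>x0 i\<bar> + \<bar>x1 i\<bar>)"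
      by (rule sum_mono) (simp add: xx abs_triangle_ineq)
    also have "\<dots> = (\<Sum>i<N. \<bar>x0 i\<bar>) + (\<Sum>i<N. \<bar>x1 i\<bar>)" by (rule sum.distrib)
    also have "\<dots> \<le> l1_norm x0 + sqrt (real N) * l2_norm x1"
    proof -
      have "sqrt (real N) * sqrt (\<Sum>i<N. (x1 i)^2) \<le> sqrt (real N) * l2_norm x1"
        by (rule mult_left_mono[OF b]) simp
      then show ?thesis using a c by linarith
    qed
    finally show ?thesis using s by simp
  qed
  then show ?thesis unfolding K_l12_def x_def[symmetric] by (intro cInf_greatest[OF ne]) auto
qed

lemma Linf_norm_nonneg: "f \<in> Linf M \<Longrightarrow> 0 \<le> Linf_norm M f"
  unfolding Linf_norm_def Linf_def
proof -
  assume "f \<in> {f \<in> borel_measurable M. \<exists>C. AE \<omega> in M. \<bar>f \<omega>\<bar> \<le> C}"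
  then obtain C where "AE \<omega> in M. \<bar>f \<omega>\<bar> \<le> C" by auto
  then have "max C 0 \<in> {C. 0 \<le> C \<and> (AE \<omega> in M. \<bar>f \<omega>\<bar> \<le> C)}"
    by (auto elim!: eventually_mono)
  then have ne: "{C. 0 \<le> C \<and> (AE \<omega> in M. \<bar>f \<omega>\<bar> \<le> C)} \<noteq> {}" by blast
  show "0 \<le> Inf {C. 0 \<le> C \<and> (AE \<omega> in M. \<bar>f \<omega>\<bar> \<le> C)}"
    by (rule cInf_greatest[OF ne]) auto
qed

lemma Linf_AE_bound:
  assumes "f \<in> Linf M" "Linf_norm M f < c"
  shows "AE \<omega> in M. \<bar>f \<omega>\<bar> \<le> c"
proof -
  from assms(1) obtain C where "AE \<omega> in M. \<bar>f \<omega>\<bar> \<le> C" by (auto simp: Linf_def)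
  then have "max C 0 \<in> {C. 0 \<le> C \<and> (AE \<omega> in M. \<bar>f \<omega>\<bar> \<le> C)}"
    by (auto elim!: eventually_mono)
  then have ne: "{C. 0 \<le> C \<and> (AE \<omega> in M. \<bar>f \<omega>\<bar> \<le> C)} \<noteq> {}" by blast
  from cInf_lessD[OF ne assms(2)[unfolded Linf_norm_def]] obtain d where
    "AE \<omega> in M. \<bar>f \<omega>\<bar> \<le> d" "d < c" by auto
  then show ?thesis by (auto elim!: eventually_mono)
qed

lemma Linf_norm_le:
  assumes "AE \<omega> in M. \<bar>f \<omega>\<bar> \<le> c" "0 \<le> c"
  shows "Linf_norm M f \<le> c"
  unfolding Linf_norm_def using assms by (intro cInf_lower) (auto intro!: bdd_belowI[of _ 0])

lemma K_LinfL2_le: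
  assumes "0 < t" "f0 \<in> Linf M" "f1 \<in> L2 M" "AE \<omega> in M. f \<omega> = f0 \<omega> + f1 \<omega>"
  shows "K_LinfL2 M t f \<le> Linf_norm M f0 + t * L2_norm M f1"
  unfolding K_LinfL2_def
proof (rule cInf_lower)
  show "Linf_norm M f0 + t * L2_norm M f1 \<in> {Linf_norm M f0 + t * L2_norm M f1 | f0 f1.
      f0 \<in> Linf M \<and> f1 \<in> L2 M \<and> (AE \<omega> in M. f \<omega> = f0 \<omega> + f1 \<omega>)}" using assms by blast
  show "bdd_below {Linf_norm M f0 + t * L2_norm M f1 | f0 f1.
      f0 \<in> Linf M \<and> f1 \<in> L2 M \<and> (AE \<omega> in M. f \<omega> = f0 \<omega> + f1 \<omega>)}"
  proof (rule bdd_belowI[of _ 0], clarify)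
    fix g0 g1 assume "g0 \<in> Linf M"
    then show "0 \<le> Linf_norm M g0 + t * L2_norm M g1"
      using Linf_norm_nonneg[of g0 M] assms(1) by (simp add: L2_norm_def)
  qed
qed



lemma clamp_sq: fixes l p :: real assumes "0 < l"
  shows "(p - max (-l) (min l p))^2 \<le> p^4 / l^2"
proof -
  have q: "p^2 \<le> p^4 / l^2" if "l \<le> \<bar>p\<bar>"
  proof -
    have "l^2 \<le> p^2" using that assms by (metis abs_le_square_iff less_imp_le abs_of_pos)
    then have "p^2 * l^2 \<le> p^2 * p^2" by (intro mult_left_mono) auto
    then show ?thesis using assms by (simp add: field_simps power4_eq_xxxx power2_eq_square)
  qed
  consider "\<bar>p\<bar> \<le> l" | "l < p" | "p < -l" by linarith
  then show ?thesis
  proof cases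
    case 1 then have "p - max (-l) (min l p) = 0" by auto
    then show ?thesis by simp
  next
    case 2
    then have "(p - max (-l) (min l p))^2 = (p - l)^2" using assms by auto
    also have "\<dots> \<le> p^2" using 2 assms by (intro power_mono) auto
    also have "\<dots> \<le> p^4 / l^2" by (intro q) (use 2 in simp)
    finally show ?thesis .
  next
    case 3
    then have "(p - max (-l) (min l p))^2 = (p + l)^2" using assms by auto
    also have "\<dots> = (-p - l)^2" by (simp add: power2_eq_square algebra_simps)
    also have "\<dots> \<le> (-p)^2" using 3 assms by (intro power_mono) auto
    also have "\<dots> = p^2" by simp
    also have "\<dots> \<le> p^4 / l^2" by (intro q) (use 3 in simp)
    finally show ?thesis .
  qed
qed

lemma lower4:
  fixes \<phi> f :: "'a \<Rightarrow> real" and N :: nat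
  assumes P: "prob_space M" and C: "0 < C" and N: "1 \<le> N"
  and phim: "\<phi> \<in> borel_measurable M" and bd: "AE \<omega> in M. \<bar>\<phi> \<omega>\<bar> \<le> D"
  and K: "real N / C \<le> K_LinfL2 M (sqrt (real N)) f"
  and fe: "AE \<omega> in M. f \<omega> = \<phi> \<omega>"
  shows "real N ^ 3 / (16 * C^4) \<le> (\<integral>\<omega>. (\<phi> \<omega>)^4 \<partial>M)"
proof -
  interpret prob_space M by fact
  define lam where "lam = real N / (2*C)"
  have lam: "0 < lam" using C N by (simp add: lam_def)
  define g where "g = (\<lambda>\<omega>. max (-lam) (min lam (\<phi> \<omega>)))"
  define h where "h = (\<lambda>\<omega>. \<phi> \<omega> - g \<omega>)"
  have gm: "g \<in> borel_measurable M" unfolding g_def using phim by measurable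
  have gb: "\<bar>g \<omega>\<bar> \<le> lam" for \<omega> using lam by (auto simp: g_def)
  have gL: "g \<in> Linf M" unfolding Linf_def using gm gb by auto
  have gn: "Linf_norm M g \<le> lam" by (rule Linf_norm_le) (use gb lam in auto)
  have hm: "h \<in> borel_measurable M" unfolding h_def using phim gm by measurable
  have hb: "\<bar>h \<omega>\<bar> \<le> \<bar>\<phi> \<omega>\<bar>" for \<omega> using lam by (auto simp: h_def g_def)
  have D0: "AE \<omega> in M. (h \<omega>)^2 \<le> D^2"
    using bd by (rule eventually_mono) (metis abs_ge_zero hb order_trans power_mono power2_abs)
  have ih: "integrable M (\<lambda>\<omega>. (h \<omega>)^2)"
    by (rule integrable_const_bound[where B="D^2"]) (use D0 hm in auto)
  have hL: "h \<in> L2 M" unfolding L2_def using hm ih by auto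
  have D4: "AE \<omega> in M. \<bar>(\<phi> \<omega>)^4\<bar> \<le> D^4"
    using bd by (rule eventually_mono) (metis abs_ge_zero power_abs power_mono)
  have i4: "integrable M (\<lambda>\<omega>. (\<phi> \<omega>)^4)"
    by (rule integrable_const_bound[where B="D^4"]) (use D4 phim in auto)
  define I4 where "I4 = (\<integral>\<omega>. (\<phi> \<omega>)^4 \<partial>M)"
  have I40: "0 \<le> I4" unfolding I4_def by (rule integral_nonneg_AE) simp
  have "(\<integral>\<omega>. (h \<omega>)^2 \<partial>M) \<le> (\<integral>\<omega>. (\<phi> \<omega>)^4 / lam^2 \<partial>M)"
    by (rule integral_mono[OF ih]) (use i4 clamp_sq[OF lam] in \<open>auto simp: h_def g_def\<close>)
  also have "\<dots> = I4 / lam^2" unfolding I4_def by (rule integral_divide_zero)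
  finally have hI: "(\<integral>\<omega>. (h \<omega>)^2 \<partial>M) \<le> I4 / lam^2" .
  have "L2_norm M h \<le> sqrt (I4 / lam^2)" unfolding L2_norm_def using hI by simp
  also have "\<dots> = sqrt I4 / lam" using lam by (simp add: real_sqrt_divide)
  finally have hn: "L2_norm M h \<le> sqrt I4 / lam" .
  have fgh: "AE \<omega> in M. f \<omega> = g \<omega> + h \<omega>" using fe by (rule eventually_mono) (simp add: h_def)
  have sN: "0 < sqrt (real N)" using N by simp
  have "real N / C \<le> Linf_norm M g + sqrt (real N) * L2_norm M h"
    using K K_LinfL2_le[OF sN gL hL fgh] by linarith
  also have "\<dots> \<le> lam + sqrt (real N) * (sqrt I4 / lam)"
    using gn hn sN by (intro add_mono mult_left_mono) auto
  finally have k1: "real N / C \<le> lam + sqrt (real N) * (sqrt I4 / lam)" .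
  define s where "s = sqrt I4"
  have s0: "0 \<le> s" using I40 by (simp add: s_def)
  have k2: "real N / (2 * C) \<le> sqrt (real N) * s * (2 * C) / real N"
    using k1 C N unfolding lam_def s_def by (simp add: field_simps)
  have k3: "real N ^ 2 \<le> 4 * C^2 * sqrt (real N) * s"
    using k2 C N by (simp add: field_simps power2_eq_square)
  have "(real N ^ 2)^2 \<le> (4 * C^2 * sqrt (real N) * s)^2"
    by (rule power_mono[OF k3]) simp
  also have "\<dots> = 4^2 * (C^2)^2 * (sqrt (real N))^2 * s^2"
    by (simp add: power_mult_distrib)
  also have "\<dots> = 16 * C^4 * real N * I4"
    using I40 by (simp add: s_def power_mult_distrib flip: power_mult)
  finally have k4: "real N ^ 4 \<le> 16 * C^4 * real N * I4" by (simp add: power4_eq_xxxx power2_eq_square)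
  have "real N ^ 3 \<le> 16 * C^4 * I4"
  proof -
    have "real N * real N ^ 3 \<le> real N * (16 * C^4 * I4)"
      using k4 by (simp add: power4_eq_xxxx power3_eq_cube algebra_simps)
    then show ?thesis using N by simp
  qed
  then show ?thesis using C unfolding I4_def by (simp add: field_simps)
qed



lemma SS_abs:
  assumes "\<And>n. n < N \<Longrightarrow> \<bar>a n\<bar> \<le> B"
  shows "\<bar>SS a N e\<bar> \<le> real N * B"
proof -
  have "\<bar>SS a N e\<bar> \<le> (\<Sum>n<N. \<bar>sgnb (e n) * a n\<bar>)" unfolding SS_def by (rule sum_abs)
  also have "\<dots> \<le> (\<Sum>n<N. B)" by (rule sum_mono) (use assms in \<open>auto simp: abs_mult\<close>)
  finally show ?thesis by simp
qed

theorem theorem5p1: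
  fixes M :: "'a measure"
  assumes "prob_space M"
  shows "\<not> l12_K_closed_representable_in_LinfL2 M"
proof
  assume "l12_K_closed_representable_in_LinfL2 M"
  then obtain T :: "(nat \<Rightarrow> real) \<Rightarrow> ('a \<Rightarrow> real)" and C where C: "0 < C"
    and lin: "\<forall>x\<in>l12_sum. \<forall>y\<in>l12_sum. \<forall>a b :: real.
          AE \<omega> in M. T (\<lambda>i. a * x i + b * y i) \<omega> = a * T x \<omega> + b * T y \<omega>"
    and Bl1: "\<exists>B. \<forall>x\<in>l1. T x \<in> Linf M \<and> Linf_norm M (T x) \<le> B * l1_norm x"
    and Klow: "\<forall>x\<in>l12_sum. \<forall>t>0. K_l12 t x / C \<le> K_LinfL2 M t (T x)"
    unfolding l12_K_closed_representable_in_LinfL2_def by blast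
  interpret prob_space M by fact
  from Bl1 obtain B where B: "\<And>x. x \<in> l1 \<Longrightarrow> T x \<in> Linf M \<and> Linf_norm M (T x) \<le> B * l1_norm x"
    by blast
  define B' where "B' = \<bar>B\<bar> + 1"
  have B'0: "0 < B'" by (simp add: B'_def)
  define uv :: "nat \<Rightarrow> nat \<Rightarrow> real" where "uv n = (\<lambda>i. if i = n then 1 else 0)" for n
  have uvf: "finite {i. uv n i \<noteq> 0}" for n by (simp add: uv_def)
  have l1n: "l1_norm (uv n) = 1" for n
  proof -
    have "l1_norm (uv n) = (\<Sum>i\<in>{n}. \<bar>uv n i\<bar>)"
      unfolding l1_norm_def by (rule suminf_finite) (auto simp: uv_def)
    then show ?thesis by (simp add: uv_def)
  qed
  have aL: "T (uv n) \<in> Linf M" for n using B[OF fin_supp(1)[OF uvf]] by blast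
  have am[measurable]: "T (uv n) \<in> borel_measurable M" for n using aL[of n] by (simp add: Linf_def)
  have aAE: "AE \<omega> in M. \<bar>T (uv n) \<omega>\<bar> \<le> B'" for n
  proof (rule Linf_AE_bound[OF aL])
    have "Linf_norm M (T (uv n)) \<le> B * l1_norm (uv n)" using B[OF fin_supp(1)[OF uvf[of n]]] by blast
    then have "Linf_norm M (T (uv n)) \<le> B" using l1n[of n] by simp
    then show "Linf_norm M (T (uv n)) < B'" unfolding B'_def by linarith
  qed
  define xv :: "nat \<Rightarrow> (nat \<Rightarrow> bool) \<Rightarrow> nat \<Rightarrow> real" where "xv N e = (\<lambda>i. if i < N then sgnb (e i) else 0)" for N e
  have xvf: "finite {i. xv N e i \<noteq> 0}" for N e
    by (rule finite_subset[of _ "{..<N}"]) (auto simp: xv_def)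
  have xvin: "xv N e \<in> l12_sum" for N e by (rule fin_supp(3)[OF xvf])
  have uvin: "uv n \<in> l12_sum" for n by (rule fin_supp(3)[OF uvf])
  have linsum: "AE \<omega> in M. T (xv N e) \<omega> = SS (\<lambda>n. T (uv n) \<omega>) N e" for N e
  proof (induction N)
    case 0
    have eq: "(\<lambda>i. 0 * xv 0 e i + 0 * xv 0 e i) = xv 0 e" by (simp add: xv_def)
    have "AE \<omega> in M. T (\<lambda>i. 0 * xv 0 e i + 0 * xv 0 e i) \<omega> = 0 * T (xv 0 e) \<omega> + 0 * T (xv 0 e) \<omega>"
      using lin xvin by blast
    then show ?case unfolding eq by (simp add: SS_def)
  next
    case (Suc N)
    have eq: "(\<lambda>i. 1 * xv N e i + sgnb (e N) * uv N i) = xv (Suc N) e"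
      by (auto simp: xv_def uv_def fun_eq_iff less_Suc_eq)
    have "AE \<omega> in M. T (\<lambda>i. 1 * xv N e i + sgnb (e N) * uv N i) \<omega> = 1 * T (xv N e) \<omega> + sgnb (e N) * T (uv N) \<omega>"
      using lin xvin uvin by blast
    then have "AE \<omega> in M. T (xv (Suc N) e) \<omega> = T (xv N e) \<omega> + sgnb (e N) * T (uv N) \<omega>"
      unfolding eq by simp
    then show ?case using Suc.IH by eventually_elim (simp add: SS_def)
  qed
  define N where "N = nat \<lceil>48 * C^4 * B'^4\<rceil> + 1"
  have N1: "1 \<le> N" by (simp add: N_def)
  have Nbig: "48 * C^4 * B'^4 < real N" unfolding N_def by linarith
  define \<phi> where "\<phi> e \<omega> = SS (\<lambda>n. T (uv n) \<omega>) N e" for e \<omega>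
  have phim: "\<phi> e \<in> borel_measurable M" for e unfolding \<phi>_def SS_def by measurable
  have aAEN: "AE \<omega> in M. \<forall>n\<in>{..<N}. \<bar>T (uv n) \<omega>\<bar> \<le> B'"
    by (rule AE_finite_allI) (use aAE in auto)
  have phib: "AE \<omega> in M. \<bar>\<phi> e \<omega>\<bar> \<le> real N * B'" for e
    using aAEN by eventually_elim (unfold \<phi>_def, rule SS_abs, auto)
  have low: "real N ^ 3 / (16 * C^4) \<le> (\<integral>\<omega>. (\<phi> e \<omega>)^4 \<partial>M)" for e
  proof (rule lower4[OF \<open>prob_space M\<close> C N1 phim phib])
    have sN: "0 < sqrt (real N)" using N1 by simp
    have "real N / C \<le> K_l12 (sqrt (real N)) (xv N e) / C"
      using K_l12_lower[of N e] C unfolding xv_def by (simp add: divide_right_mono)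
    also have "\<dots> \<le> K_LinfL2 M (sqrt (real N)) (T (xv N e))" using Klow xvin sN by blast
    finally show "real N / C \<le> K_LinfL2 M (sqrt (real N)) (T (xv N e))" .
    show "AE \<omega> in M. T (xv N e) \<omega> = \<phi> e \<omega>" using linsum[of N e] by (simp add: \<phi>_def)
  qed
  have i4: "integrable M (\<lambda>\<omega>. (\<phi> e \<omega>)^4)" for e
  proof (rule integrable_const_bound[where B="(real N * B')^4"])
    show "AE \<omega> in M. norm ((\<phi> e \<omega>)^4) \<le> (real N * B')^4"
      using phib[of e] by eventually_elim (metis abs_ge_zero norm_power real_norm_def power_mono)
  qed (use phim in auto)
  have "real (card (EE N)) * (real N ^ 3 / (16 * C^4)) = (\<Sum>e\<in>EE N. real N ^ 3 / (16 * C^4))"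
    by simp
  also have "\<dots> \<le> (\<Sum>e\<in>EE N. \<integral>\<omega>. (\<phi> e \<omega>)^4 \<partial>M)" by (rule sum_mono) (rule low)
  also have "\<dots> = (\<integral>\<omega>. (\<Sum>e\<in>EE N. (\<phi> e \<omega>)^4) \<partial>M)" using Bochner_Integration.integral_sum[where I="EE N" and M=M and f="\<lambda>e \<omega>. (\<phi> e \<omega>)^4"] i4 by simp
  also have "\<dots> \<le> 2^N * (3 * real N^2 * B'^4)"
  proof (rule integral_le_const)
    show "integrable M (\<lambda>\<omega>. \<Sum>e\<in>EE N. (\<phi> e \<omega>)^4)" using Bochner_Integration.integrable_sum[where I="EE N" and f="\<lambda>e \<omega>. (\<phi> e \<omega>)^4"] i4 by simp
    show "AE \<omega> in M. (\<Sum>e\<in>EE N. (\<phi> e \<omega>)^4) \<le> 2^N * (3 * real N^2 * B'^4)"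
      using aAEN by eventually_elim (unfold \<phi>_def, rule M4, auto)
  qed
  finally have "2^N * (real N ^ 3 / (16 * C^4)) \<le> 2^N * (3 * real N^2 * B'^4)"
    by (simp only: card_EE')
  then have "real N ^ 3 / (16 * C^4) \<le> 3 * real N^2 * B'^4"
    by (rule mult_left_le_imp_le) simp
  then have "real N ^ 3 \<le> 48 * C^4 * B'^4 * real N^2" using C by (simp add: field_simps)
  then have "real N * real N^2 \<le> (48 * C^4 * B'^4) * real N^2" by (simp add: power3_eq_cube power2_eq_square algebra_simps)
  then have "real N \<le> 48 * C^4 * B'^4" using N1 by simp
  then show False using Nbig by linarith
qed

end
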